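(* For the submodule $M=[(z-w)^2]$ of $H^2(\mathbb D^2)$, the sequence $\{\Sigma_k(M)\}_{k\ge0}$ is strictly decreasing, and as $k\to\infty$, \[ \Sigma_k(M)=\frac{92}{105k}+\frac{46}{105k^2}+O\!\left(\frac1{k^3}\right). \]
   Context: $H^2(\mathbb D^2)$ is the Hardy space on the bidisk (monomials $z^aw^b$ orthonormal); $[q]$ is the smallest closed subspace containing $q$ invariant under multiplication by $z$ and $w$. Let $p=(z-w)^2$. For $n\ge0$ let $A^n=(a_{i,j})_{i,j=0}^n$ with $a_{i,j}=\langle pw^{|i-j|},pz^{|i-j|}\rangle$ (the symmetric pentadiagonal Toeplitz matrix with diagonal $6$, first off-diagonals $-4$, second off-diagonals $1$); $D_0=1$, $D_n=\det A^{n-1}$ ($n\ge1$); $A^n_{i,j}$ is the $(i,j)$ cofactor of $A^n$. Define $\phi_0=\psi_0=p/\|p\|$ and for $n\ge1$ $\phi_n=\frac{\sum_{j=0}^n pA^n_{0,j}z^jw^{n-j}}{\sqrt{D_{n+1}D_n}}$, $\psi_n=\frac{\sum_{j=0}^n pA^n_{n,j}z^jw^{n-j}}{\sqrt{D_{n+1}D_n}}$, orthonormal bases of $M\ominus zM$ and $M\ominus wM$ for $M=[p]$. The numerical invariants are $\Sigma_k(M):=\sum_{n\ge0}|\langle w^k\phi_n,z^k\psi_n\rangle|^2$, $k\ge0$ (for $k=0,1$ these coincide with $\|[R_2^*,R_2][R_1^*,R_1]\|_{HS}^2$ and $\|[R_1^*,R_2]\|_{HS}^2$, $R_1,R_2$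 being multiplication by $z,w$ on $M$). *)

theory Defs
  imports "HOL-Analysis.Infinite_Sum" "HOL-Library.Landau_Symbols"
    "Jordan_Normal_Form.Determinant"
begin

text \<open>Elements of H^2(D^2) with real Taylor coefficients are represented by their
coefficient functions: f (a,b) is the coefficient of z^a w^b.  Monomials are
orthonormal, so the inner product is the sum of coefficient products.\<close>

type_synonym h2 = "nat \<times> nat \<Rightarrow> real"

definition h2_inner :: "h2 \<Rightarrow> h2 \<Rightarrow> real" where
  "h2_inner f g = (\<Sum>\<^sub>\<infinity>m. f m * g m)"

definition h2_norm :: "h2 \<Rightarrow> real" where
  "h2_norm f = sqrt (h2_inner f f)"

definition mon_mult :: "nat \<Rightarrow> nat \<Rightarrow> h2 \<Rightarrow> h2" where
  "mon_mult a b f = (\<lambda>(i,j). if a \<le> i \<and> b \<le> j then f (i - a, j - b) else 0)"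

text \<open>p = (z - w)^2 = z^2 - 2 z w + w^2.\<close>
definition pp :: h2 where
  "pp = (\<lambda>(i,j). if (i,j) = (2,0) then 1 else if (i,j) = (1,1) then -2
                 else if (i,j) = (0,2) then 1 else 0)"

definition absdiff :: "nat \<Rightarrow> nat \<Rightarrow> nat" where
  "absdiff i j = (if i \<le> j then j - i else i - j)"

definition Amat :: "nat \<Rightarrow> real mat" where
  "Amat n = mat (n+1) (n+1)
     (\<lambda>(i,j). h2_inner (mon_mult 0 (absdiff i j) pp) (mon_mult (absdiff i j) 0 pp))"

definition Dn :: "nat \<Rightarrow> real" where
  "Dn n = (if n = 0 then 1 else det (Amat (n - 1)))"

definition phi :: "nat \<Rightarrow> h2" where
  "phi n = (if n = 0 then (\<lambda>m. pp m / h2_norm pp)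
            else (\<lambda>m. (\<Sum>j\<le>n. cofactor (Amat n) 0 j * mon_mult j (n - j) pp m)
                       / sqrt (Dn (n+1) * Dn n)))"

definition psi :: "nat \<Rightarrow> h2" where
  "psi n = (if n = 0 then (\<lambda>m. pp m / h2_norm pp)
            else (\<lambda>m. (\<Sum>j\<le>n. cofactor (Amat n) n j * mon_mult j (n - j) pp m)
                       / sqrt (Dn (n+1) * Dn n)))"

definition Sigma :: "nat \<Rightarrow> real" where
  "Sigma k = (\<Sum>n. \<bar>h2_inner (mon_mult 0 k (phi n)) (mon_mult k 0 (psi n))\<bar>^2)"

end

theory Submission
  imports Defs "HOL-Real_Asymp.Real_Asymp"
begin


definition Pc :: "int \<Rightarrow> real" where
  "Pc d = (if d = 0 then 1 else if d = 1 then -2 else if d = 2 then 1 else 0)"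

definition kap :: "nat \<Rightarrow> real" where
  "kap d = (if d = 0 then 6 else if d = 1 then -4 else if d = 2 then 1 else 0)"

lemma mon_pp: "mon_mult i u pp (a,b) = (if a + b = i + u + 2 then Pc (int a - int i) else 0)"
  unfolding mon_mult_def pp_def Pc_def by auto

lemma h2_inner_diag:
  assumes "\<And>a b. f (a,b) \<noteq> 0 \<Longrightarrow> a + b = s"
  shows "h2_inner f g = (\<Sum>a\<le>s. f (a, s-a) * g (a, s-a))"
proof -
  let ?S = "(\<lambda>a. (a, s-a)) ` {..s}"
  have z: "f x * g x = 0" if "x \<notin> ?S" for x
  proof (cases x)
    case (Pair a b)
    show ?thesis
    proof (rule ccontr)
      assume "f x * g x \<noteq> 0"
      then have "f (a,b) \<noteq> 0" using Pair by simp
      then have "a + b = s" by (rule assms)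
      then have "x \<in> ?S" using Pair by force
      then show False using that by blast
    qed
  qed
  have "h2_inner f g = infsum (\<lambda>m. f m * g m) ?S"
    unfolding h2_inner_def
    by (rule infsum_cong_neutral) (use z in auto)
  also have "\<dots> = sum (\<lambda>m. f m * g m) ?S" by simp
  also have "\<dots> = (\<Sum>a\<le>s. f (a, s-a) * g (a, s-a))"
    by (subst sum.reindex) (auto simp: inj_on_def)
  finally show ?thesis .
qed

lemma kernel:
  assumes "i \<le> t" "j \<le> t"
  shows "h2_inner (mon_mult i (t-i) pp) (mon_mult j (t-j) pp) = kap (absdiff i j)"
proof -
  have "h2_inner (mon_mult i (t-i) pp) (mon_mult j (t-j) pp) =
     (\<Sum>a\<le>t+2. Pc (int a - int i) * Pc (int a - int j))"
    by (subst h2_inner_diag[where s="t+2"]) (auto simp: mon_pp assms split: if_splits)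
  also have "\<dots> = (\<Sum>a\<in>{i,i+1,i+2}. Pc (int a - int i) * Pc (int a - int j))"
    by (rule sum.mono_neutral_right) (use assms in \<open>auto simp: Pc_def\<close>)
  also have "\<dots> = Pc (int i - int j) - 2 * Pc (int i + 1 - int j) + Pc (int i + 2 - int j)"
    by (simp add: Pc_def)
  also have "\<dots> = kap (absdiff i j)"
    unfolding Pc_def kap_def absdiff_def by auto
  finally show ?thesis .
qed


lemma Amat_eq: "Amat n = mat (n+1) (n+1) (\<lambda>(i,j). kap (absdiff i j))"
proof -
  have "h2_inner (mon_mult 0 (absdiff i j) pp) (mon_mult (absdiff i j) 0 pp) = kap (absdiff i j)" for i j
    using kernel[of 0 "absdiff i j" "absdiff i j"] by (simp add: absdiff_def)
  then show ?thesis unfolding Amat_def by simp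
qed

lemma kap_ind: "kap (absdiff i j) = 6*(if j = i then 1 else 0) - 4*(if j = i+1 then 1 else 0)
   - 4*(if 1 \<le> i \<and> j = i-1 then 1 else 0) + (if j = i+2 then 1 else 0) + (if 2 \<le> i \<and> j = i-2 then 1 else 0)"
  by (auto simp: kap_def absdiff_def)

lemma sum_ind: fixes M a :: nat shows "(\<Sum>j<M. (if P \<and> j = a then 1 else 0) * f j) = (if P \<and> a < M then f a else (0::real))"
proof -
  have "(\<Sum>j<M. (if P \<and> j = a then 1 else 0) * f j) = (\<Sum>j<M. if j = a then (if P then f a else 0) else 0)"
    by (rule sum.cong) auto
  also have "\<dots> = (if a < M then (if P then f a else 0) else 0)"
    by (subst sum.delta) auto
  finally show ?thesis by auto
qed

lemma band: "(\<Sum>j<M. kap (absdiff i j) * f j) = (if i < M then 6 * f i else 0)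
   - (if i+1 < M then 4 * f (i+1) else 0) - (if 1 \<le> i \<and> i-1 < M then 4*f(i-1) else 0)
   + (if i+2<M then f(i+2) else 0) + (if 2 \<le> i \<and> i-2 < M then f (i-2) else (0::real))"
proof -
  have "(\<Sum>j<M. kap (absdiff i j) * f j) = 6 * (\<Sum>j<M. (if True \<and> j = i then 1 else 0) * f j)
     - 4 * (\<Sum>j<M. (if True \<and> j = i+1 then 1 else 0) * f j)
     - 4 * (\<Sum>j<M. (if 1 \<le> i \<and> j = i-1 then 1 else 0) * f j)
     + (\<Sum>j<M. (if True \<and> j = i+2 then 1 else 0) * f j)
     + (\<Sum>j<M. (if 2 \<le> i \<and> j = i-2 then 1 else 0) * f j)"
    unfolding kap_ind by (simp add: algebra_simps sum.distrib sum_subtractf sum_distrib_left)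
  then show ?thesis unfolding sum_ind by simp
qed

definition cv :: "nat \<Rightarrow> nat \<Rightarrow> real" where
  "cv n j = (real j + 1) * (real n + 1 - real j) * (real n + 2 - real j)"

lemma cvg: "j \<le> n+2 \<Longrightarrow> (if j < n+1 then c * cv n j else 0) = c * cv n j"
proof (cases "j < n+1")
  case False
  assume "j \<le> n+2"
  then have "j = n+1 \<or> j = n+2" using False by auto
  then show ?thesis using False by (auto simp: cv_def)
qed simp

lemma rowsum: assumes "i \<le> n"
  shows "(\<Sum>j<n+1. kap (absdiff i j) * cv n j) = (if i = 0 then (real n+3)*(real n+4) else 0)"
proof -
  have "(\<Sum>j<n+1. kap (absdiff i j) * cv n j) = 6 * cv n i - 4 * cv n (i+1)
     - (if 1 \<le> i then 4*cv n (i-1) else 0) + cv n (i+2) + (if 2 \<le> i then cv n (i-2) else 0)"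
    unfolding band using assms cvg[of "i+1" n 4] cvg[of "i+2" n 1] by auto
  also have "\<dots> = (if i = 0 then (real n+3)*(real n+4) else 0)"
  proof (cases "i \<ge> 2")
    case True
    then obtain q where q: "i = q + 2" by (metis add.commute le_add_diff_inverse)
    show ?thesis unfolding q by (simp add: cv_def algebra_simps)
  next
    case False
    then have "i = 0 \<or> i = 1" by auto
    then show ?thesis by (auto simp: cv_def algebra_simps)
  qed
  finally show ?thesis .
qed

lemma absdiff_sym: "absdiff i j = absdiff j i" by (simp add: absdiff_def)

lemma rowsum_rev: assumes "i \<le> n"
  shows "(\<Sum>j<n+1. kap (absdiff i j) * cv n (n-j)) = (if i = n then (real n+3)*(real n+4) else 0)"
proof -
  have "(\<Sum>j<n+1. kap (absdiff i j) * cv n (n-j)) = (\<Sum>j<n+1. kap (absdiff i (n - (n - j))) * cv n (n-j))"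
    by (rule sum.cong) auto
  also have "\<dots> = (\<Sum>j<n+1. kap (absdiff i (n - j)) * cv n j)"
    using sum.nat_diff_reindex[where g="\<lambda>j. kap (absdiff i (n - j)) * cv n j" and n="n+1"] by simp
  also have "\<dots> = (\<Sum>j<n+1. kap (absdiff (n-i) j) * cv n j)"
    by (rule sum.cong) (use assms in \<open>auto simp: absdiff_def add.commute\<close>)
  also have "\<dots> = (if i = n then (real n+3)*(real n+4) else 0)"
    using rowsum[of "n-i" n] assms by auto
  finally show ?thesis .
qed

lemma Wsum: assumes "r \<ge> n+1"
  shows "(\<Sum>i<n+1. kap (absdiff i r) * cv n i) =
     (if r = n+1 then -2*(real n+4) else if r = n+2 then 2*(real n+1) else 0)"
proof -
  have "(\<Sum>i<n+1. kap (absdiff i r) * cv n i) = (\<Sum>i<n+1. kap (absdiff r i) * cv n i)"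
    by (simp add: absdiff_sym)
  also have "\<dots> = - (if r = n+1 then 4*cv n n else 0) + (if r = n+1 \<and> n \<ge> 1 then cv n (n-1) else 0)
       + (if r = n+2 then cv n n else 0)"
    unfolding band using assms by auto
  also have "\<dots> = (if r = n+1 then -2*(real n+4) else if r = n+2 then 2*(real n+1) else 0)"
    by (auto simp: cv_def algebra_simps of_nat_diff)
  finally show ?thesis .
qed


lemma Amat_carrier: "Amat n \<in> carrier_mat (n+1) (n+1)"
  unfolding Amat_eq by simp

lemma Amat_idx: "i < n+1 \<Longrightarrow> j < n+1 \<Longrightarrow> Amat n $$ (i,j) = kap (absdiff i j)"
  unfolding Amat_eq by simp

lemma sum_delta_r: fixes M j :: nat
  shows "j < M \<Longrightarrow> (\<Sum>l<M. f l * (if l = j then c else 0)) = f j * (c::real)"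
proof -
  assume j: "j < M"
  have "(\<Sum>l<M. f l * (if l = j then c else 0)) = (\<Sum>l<M. if l = j then f j * c else 0)"
    by (rule sum.cong) auto
  then show ?thesis using j by simp
qed

lemma cof_gen:
  assumes x: "\<And>q. q < n+1 \<Longrightarrow> (\<Sum>l<n+1. kap (absdiff q l) * x l) = (if q = q0 then c else 0)"
    and q0: "q0 < n+1" and j: "j < n+1"
  shows "cofactor (Amat n) q0 j * c = det (Amat n) * x j"
proof -
  let ?A = "Amat n"
  have AC: "?A \<in> carrier_mat (n+1) (n+1)" by (rule Amat_carrier)
  have adjC: "adj_mat ?A \<in> carrier_mat (n+1) (n+1)" using adj_mat(1)[OF AC] .
  have M: "adj_mat ?A * ?A = det ?A \<cdot>\<^sub>m 1\<^sub>m (n+1)" using adj_mat(3)[OF AC] .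
  have e1: "(adj_mat ?A * ?A) $$ (j,l) = (if j = l then det ?A else 0)" if "l < n+1" for l
    using that j by (simp add: M)
  have e2: "(adj_mat ?A * ?A) $$ (j,l) = (\<Sum>q<n+1. cofactor ?A q j * kap (absdiff q l))" if "l < n+1" for l
  proof -
    have "(adj_mat ?A * ?A) $$ (j,l) = row (adj_mat ?A) j \<bullet> col ?A l"
      using adjC AC j that by simp
    also have "\<dots> = (\<Sum>q\<in>{0..<n+1}. adj_mat ?A $$ (j,q) * ?A $$ (q,l))"
      unfolding scalar_prod_def using adjC AC j that by simp
    also have "\<dots> = (\<Sum>q<n+1. cofactor ?A q j * kap (absdiff q l))"
      using AC j that by (intro sum.cong) (auto simp: adj_mat_def Amat_idx)
    finally show ?thesis .
  qed
  have "det ?A * x j = (\<Sum>l<n+1. x l * (if l = j then det ?A else 0))"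
    using sum_delta_r[OF j, of x "det ?A"] by (simp add: mult.commute)
  also have "\<dots> = (\<Sum>l<n+1. (if j = l then det ?A else 0) * x l)"
    by (intro sum.cong) auto
  also have "\<dots> = (\<Sum>l<n+1. (\<Sum>q<n+1. cofactor ?A q j * kap (absdiff q l)) * x l)"
    by (intro sum.cong) (auto simp: e1[symmetric] e2)
  also have "\<dots> = (\<Sum>q<n+1. cofactor ?A q j * (\<Sum>l<n+1. kap (absdiff q l) * x l))"
  proof -
    have "(\<Sum>l<n+1. (\<Sum>q<n+1. cofactor ?A q j * kap (absdiff q l)) * x l) =
       (\<Sum>l<n+1. \<Sum>q<n+1. cofactor ?A q j * (kap (absdiff q l) * x l))"
      by (rule sum.cong[OF refl]) (simp only: sum_distrib_right mult.assoc)
    also have "\<dots> = (\<Sum>q<n+1. \<Sum>l<n+1. cofactor ?A q j * (kap (absdiff q l) * x l))"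
      by (rule sum.swap)
    also have "\<dots> = (\<Sum>q<n+1. cofactor ?A q j * (\<Sum>l<n+1. kap (absdiff q l) * x l))"
      by (rule sum.cong[OF refl]) (simp only: sum_distrib_left)
    finally show ?thesis .
  qed
  also have "\<dots> = (\<Sum>q<n+1. cofactor ?A q j * (if q = q0 then c else 0))"
    by (rule sum.cong[OF refl], subst x) auto
  also have "\<dots> = cofactor ?A q0 j * c"
    by (rule sum_delta_r[OF q0])
  finally show ?thesis by simp
qed

lemma pos34: "(real n + 3) * (real n + 4) \<noteq> 0" by (simp add: add_pos_pos)

lemma cof0: assumes "j \<le> n"
  shows "cofactor (Amat n) 0 j = det (Amat n) * cv n j / ((real n+3)*(real n+4))"
proof -
  have "cofactor (Amat n) 0 j * ((real n+3)*(real n+4)) = det (Amat n) * cv n j"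
    by (rule cof_gen) (use assms rowsum in auto)
  then show ?thesis using pos34[of n] by (simp add: field_simps)
qed

lemma cofn: assumes "j \<le> n"
  shows "cofactor (Amat n) n j = det (Amat n) * cv n (n-j) / ((real n+3)*(real n+4))"
proof -
  have "cofactor (Amat n) n j * ((real n+3)*(real n+4)) = det (Amat n) * cv n (n-j)"
    by (rule cof_gen[where x="\<lambda>j. cv n (n-j)"]) (use assms rowsum_rev in auto)
  then show ?thesis using pos34[of n] by (simp add: field_simps)
qed

lemma mat_delete_Amat: "mat_delete (Amat (Suc n)) 0 0 = Amat n"
  by (rule eq_matI) (auto simp: mat_delete_def Amat_eq absdiff_def)

lemma det_rec: "det (Amat n) * ((real n+1)*(real n+2)) =
   (if n = 0 then 1 else det (Amat (n-1))) * ((real n+3)*(real n+4))"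
proof -
  have c: "cofactor (Amat n) 0 0 = det (Amat n) * ((real n+1)*(real n+2)) / ((real n+3)*(real n+4))"
    using cof0[of 0 n] by (simp add: cv_def)
  have d: "cofactor (Amat n) 0 0 = (if n = 0 then 1 else det (Amat (n-1)))"
  proof (cases n)
    case 0
    have "mat_delete (Amat 0) 0 0 \<in> carrier_mat 0 0"
      using mat_delete_carrier[OF Amat_carrier[of 0]] by simp
    then show ?thesis using 0 by (simp add: cofactor_def)
  next
    case (Suc m)
    then show ?thesis by (simp add: cofactor_def mat_delete_Amat)
  qed
  show ?thesis using c d pos34[of n] by (simp add: field_simps)
qed

lemma det_Amat: "det (Amat n) = (real n+2)*(real n+3)^2*(real n+4)/12"
proof (induction n)
  case 0
  then show ?case using det_rec[of 0] by simp
next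
  case (Suc n)
  have "det (Amat (Suc n)) * ((real n+2)*(real n+3)) = det (Amat n) * ((real n+4)*(real n+5))"
    using det_rec[of "Suc n"] by (simp add: algebra_simps)
  then have h: "det (Amat (Suc n)) * ((real n+2)*(real n+3)) =
     (real n+2)*(real n+3)^2*(real n+4)/12 * ((real n+4)*(real n+5))" using Suc by simp
  have nz: "(real n+2)*(real n+3) \<noteq> 0" by (simp add: add_pos_pos)
  have e: "(real n+2)*(real n+3)^2*(real n+4)/12 * ((real n+4)*(real n+5)) =
      ((real n+3)*(real n+4)^2*(real n+5)/12) * ((real n+2)*(real n+3))"
    by (simp add: power2_eq_square algebra_simps)
  have "det (Amat (Suc n)) * ((real n+2)*(real n+3)) = ((real n+3)*(real n+4)^2*(real n+5)/12) * ((real n+2)*(real n+3))"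
    using h unfolding e .
  then have "det (Amat (Suc n)) = (real n+3)*(real n+4)^2*(real n+5)/12"
    using mult_right_cancel[OF nz] by blast

  then show ?case by (simp add: algebra_simps)
qed

lemma Dn_eq: "Dn n = (real n+1)*(real n+2)^2*(real n+3)/12"
proof (cases n)
  case 0 then show ?thesis by (simp add: Dn_def)
next
  case (Suc m) then show ?thesis by (simp add: Dn_def det_Amat algebra_simps)
qed


definition NN :: "nat \<Rightarrow> real" where
  "NN n = (real n+1)*(real n+2)*(real n+3)*(real n+4)"

lemma NN_pos: "NN n > 0" unfolding NN_def by (simp add: add_pos_pos)

lemma mon_mult_00: "mon_mult 0 0 f = f"
  unfolding mon_mult_def by auto

lemma sqrtD: "sqrt (Dn (Suc n) * Dn n) = (real n+2)*(real n+3)/12 * sqrt (NN n)"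
proof -
  have "Dn (Suc n) * Dn n = ((real n+2)*(real n+3)/12)^2 * NN n"
    unfolding Dn_eq NN_def by (simp add: power2_eq_square algebra_simps)
  then show ?thesis by (simp add: real_sqrt_mult)
qed

lemma h2_norm_pp: "h2_norm pp = sqrt 6"
  unfolding h2_norm_def using kernel[of 0 0 0] by (simp add: mon_mult_00 kap_def absdiff_def)

lemma sqrt24: "sqrt 24 = 2 * sqrt (6::real)"
proof -
  have "sqrt (24::real) = sqrt (2^2 * 6)" by simp
  then show ?thesis by (simp only: real_sqrt_mult real_sqrt_abs)
qed

lemma aux_cancel: "P \<noteq> 0 \<Longrightarrow> K * P * c / P = K * (c::real)"
  by (simp add: field_simps)

lemma detK: "det (Amat n) = ((real n+2)*(real n+3)/12) * ((real n+3)*(real n+4))"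
  by (simp add: det_Amat power2_eq_square algebra_simps)

lemma phi_eq: "phi n = (\<lambda>m. (\<Sum>j\<le>n. cv n j * mon_mult j (n-j) pp m) / sqrt (NN n))"
proof (cases "n = 0")
  case True
  have "cv 0 0 = 2" by (simp add: cv_def)
  moreover have "NN 0 = 24" by (simp add: NN_def)
  ultimately show ?thesis using True
    by (auto simp: phi_def h2_norm_pp mon_mult_00 sqrt24 intro!: ext)
next
  case False
  let ?K = "(real n+2)*(real n+3)/12"
  have K: "?K \<noteq> 0" by (simp add: add_pos_pos)
  have c: "cofactor (Amat n) 0 j = ?K * cv n j" if "j \<le> n" for j
    using cof0[OF that] by (simp only: detK aux_cancel[OF pos34[of n]])
  have se: "(\<Sum>j\<le>n. cofactor (Amat n) 0 j * mon_mult j (n-j) pp m) = ?K * (\<Sum>j\<le>n. cv n j * mon_mult j (n-j) pp m)" for m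
    by (simp add: c sum_distrib_left mult.assoc)
  show ?thesis
  proof
    fix m
    have "phi n m = (?K * (\<Sum>j\<le>n. cv n j * mon_mult j (n-j) pp m)) / (?K * sqrt (NN n))"
      using False unfolding phi_def se sqrtD[unfolded Suc_eq_plus1] by simp
    also have "\<dots> = (\<Sum>j\<le>n. cv n j * mon_mult j (n-j) pp m) / sqrt (NN n)"
      using K by (rule mult_divide_mult_cancel_left)
    finally show "phi n m = (\<Sum>j\<le>n. cv n j * mon_mult j (n-j) pp m) / sqrt (NN n)" .
  qed
qed

lemma psi_eq: "psi n = (\<lambda>m. (\<Sum>j\<le>n. cv n (n-j) * mon_mult j (n-j) pp m) / sqrt (NN n))"
proof (cases "n = 0")
  case True
  have "cv 0 0 = 2" by (simp add: cv_def)
  moreover have "NN 0 = 24" by (simp add: NN_def)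
  ultimately show ?thesis using True
    by (auto simp: psi_def h2_norm_pp mon_mult_00 sqrt24 intro!: ext)
next
  case False
  let ?K = "(real n+2)*(real n+3)/12"
  have K: "?K \<noteq> 0" by (simp add: add_pos_pos)
  have c: "cofactor (Amat n) n j = ?K * cv n (n-j)" if "j \<le> n" for j
    using cofn[OF that] by (simp only: detK aux_cancel[OF pos34[of n]])
  have se: "(\<Sum>j\<le>n. cofactor (Amat n) n j * mon_mult j (n-j) pp m) = ?K * (\<Sum>j\<le>n. cv n (n-j) * mon_mult j (n-j) pp m)" for m
    by (simp add: c sum_distrib_left mult.assoc)
  show ?thesis
  proof
    fix m
    have "psi n m = (?K * (\<Sum>j\<le>n. cv n (n-j) * mon_mult j (n-j) pp m)) / (?K * sqrt (NN n))"
      using False unfolding psi_def se sqrtD[unfolded Suc_eq_plus1] by simp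
    also have "\<dots> = (\<Sum>j\<le>n. cv n (n-j) * mon_mult j (n-j) pp m) / sqrt (NN n)"
      using K by (rule mult_divide_mult_cancel_left)
    finally show "psi n m = (\<Sum>j\<le>n. cv n (n-j) * mon_mult j (n-j) pp m) / sqrt (NN n)" .
  qed
qed


lemma mon_mult_lin: "mon_mult a b (\<lambda>m. (\<Sum>i\<in>I. x i * f i m) / q) = (\<lambda>m. (\<Sum>i\<in>I. x i * mon_mult a b (f i) m) / q)"
  unfolding mon_mult_def by (auto intro!: ext)

lemma mon_shift_w: "mon_mult 0 k (mon_mult i u pp) = mon_mult i (u+k) pp"
  unfolding mon_mult_def pp_def by (auto intro!: ext)

lemma mon_shift_z: "mon_mult k 0 (mon_mult j u pp) = mon_mult (j+k) u pp"
  unfolding mon_mult_def pp_def by (auto intro!: ext)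

lemma h2_bilin:
  assumes f: "\<And>i a b. i \<in> I \<Longrightarrow> f i (a,b) \<noteq> 0 \<Longrightarrow> a+b = s" and I: "finite I" and J: "finite J"
  shows "h2_inner (\<lambda>m. (\<Sum>i\<in>I. x i * f i m)/q) (\<lambda>m. (\<Sum>j\<in>J. y j * g j m)/q) =
    (\<Sum>i\<in>I. \<Sum>j\<in>J. x i * y j * h2_inner (f i) (g j)) / q^2"
proof -
  have F: "a + b = s" if "(\<Sum>i\<in>I. x i * f i (a,b))/q \<noteq> 0" for a b
  proof -
    from that have "(\<Sum>i\<in>I. x i * f i (a,b)) \<noteq> 0" by auto
    then have "\<exists>i\<in>I. x i * f i (a,b) \<noteq> 0" by (meson sum.neutral)
    then obtain i where "i \<in> I" "x i * f i (a,b) \<noteq> 0" by blast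
    then show ?thesis using f by auto
  qed
  have fi: "h2_inner (f i) (g j) = (\<Sum>a\<le>s. f i (a, s-a) * g j (a, s-a))" if "i \<in> I" for i j
    by (rule h2_inner_diag) (use f that in auto)
  have "h2_inner (\<lambda>m. (\<Sum>i\<in>I. x i * f i m)/q) (\<lambda>m. (\<Sum>j\<in>J. y j * g j m)/q) =
     (\<Sum>a\<le>s. (\<Sum>i\<in>I. x i * f i (a,s-a))/q * ((\<Sum>j\<in>J. y j * g j (a,s-a))/q))"
    by (rule h2_inner_diag) (use F in auto)
  also have "\<dots> = (\<Sum>a\<le>s. (\<Sum>i\<in>I. \<Sum>j\<in>J. x i * y j * (f i (a,s-a) * g j (a,s-a))) / q^2)"
  proof (rule sum.cong[OF refl])
    fix a
    have "(\<Sum>i\<in>I. x i * f i (a,s-a))/q * ((\<Sum>j\<in>J. y j * g j (a,s-a))/q) =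
        ((\<Sum>i\<in>I. x i * f i (a,s-a)) * (\<Sum>j\<in>J. y j * g j (a,s-a))) / q^2"
      by (simp add: power2_eq_square)
    also have "(\<Sum>i\<in>I. x i * f i (a,s-a)) * (\<Sum>j\<in>J. y j * g j (a,s-a)) =
       (\<Sum>i\<in>I. \<Sum>j\<in>J. x i * f i (a,s-a) * (y j * g j (a,s-a)))"
      by (rule sum_product)
    also have "\<dots> = (\<Sum>i\<in>I. \<Sum>j\<in>J. x i * y j * (f i (a,s-a) * g j (a,s-a)))"
      by (intro sum.cong refl) (simp only: mult_ac)
    finally show "(\<Sum>i\<in>I. x i * f i (a,s-a))/q * ((\<Sum>j\<in>J. y j * g j (a,s-a))/q) =
       (\<Sum>i\<in>I. \<Sum>j\<in>J. x i * y j * (f i (a,s-a) * g j (a,s-a))) / q^2" .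
  qed
  also have "\<dots> = (\<Sum>a\<le>s. \<Sum>i\<in>I. \<Sum>j\<in>J. x i * y j * (f i (a,s-a) * g j (a,s-a))) / q^2"
    by (simp add: sum_divide_distrib)
  also have "(\<Sum>a\<le>s. \<Sum>i\<in>I. \<Sum>j\<in>J. x i * y j * (f i (a,s-a) * g j (a,s-a))) =
      (\<Sum>i\<in>I. \<Sum>a\<le>s. \<Sum>j\<in>J. x i * y j * (f i (a,s-a) * g j (a,s-a)))"
    by (rule sum.swap)
  also have "\<dots> = (\<Sum>i\<in>I. \<Sum>j\<in>J. \<Sum>a\<le>s. x i * y j * (f i (a,s-a) * g j (a,s-a)))"
    by (rule sum.cong[OF refl]) (rule sum.swap)
  also have "\<dots> = (\<Sum>i\<in>I. \<Sum>j\<in>J. x i * y j * h2_inner (f i) (g j))"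
    by (intro sum.cong refl) (simp add: fi sum_distrib_left)
  finally show ?thesis .
qed

lemma inner_eq: "h2_inner (mon_mult 0 k (phi n)) (mon_mult k 0 (psi n)) =
   (\<Sum>i\<le>n. \<Sum>j\<le>n. cv n i * cv n (n-j) * kap (absdiff i (j+k))) / NN n"
proof -
  have "h2_inner (mon_mult 0 k (phi n)) (mon_mult k 0 (psi n)) =
    h2_inner (\<lambda>m. (\<Sum>i\<le>n. cv n i * mon_mult i (n-i+k) pp m) / sqrt (NN n))
             (\<lambda>m. (\<Sum>j\<le>n. cv n (n-j) * mon_mult (j+k) (n-j) pp m) / sqrt (NN n))"
    unfolding phi_eq psi_eq mon_mult_lin mon_shift_w mon_shift_z ..
  also have "\<dots> = (\<Sum>i\<le>n. \<Sum>j\<le>n. cv n i * cv n (n-j) * h2_inner (mon_mult i (n-i+k) pp) (mon_mult (j+k) (n-j) pp)) / (sqrt (NN n))^2"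
    by (rule h2_bilin[where s="n+k+2"]) (auto simp: mon_pp split: if_splits)
  also have "\<dots> = (\<Sum>i\<le>n. \<Sum>j\<le>n. cv n i * cv n (n-j) * kap (absdiff i (j+k))) / NN n"
  proof -
    have "h2_inner (mon_mult i (n-i+k) pp) (mon_mult (j+k) (n-j) pp) = kap (absdiff i (j+k))"
      if "i \<le> n" "j \<le> n" for i j
      using kernel[of i "n+k" "j+k"] that by (simp add: add.commute)
    then show ?thesis using NN_pos[of n] by (auto intro!: sum.cong)
  qed
  finally show ?thesis .
qed


lemma Wfull: "(\<Sum>i\<le>n. kap (absdiff i r) * cv n i) =
   (if r = 0 then (real n+3)*(real n+4) else 0) + (if r = n+1 then -2*(real n+4) else 0)
   + (if r = n+2 then 2*(real n+1) else 0)"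
proof (cases "r \<le> n")
  case True
  have "(\<Sum>i\<le>n. kap (absdiff i r) * cv n i) = (\<Sum>i<n+1. kap (absdiff r i) * cv n i)"
    by (simp add: absdiff_sym lessThan_Suc_atMost)
  also have "\<dots> = (if r = 0 then (real n+3)*(real n+4) else 0)" using rowsum[OF True] .
  finally show ?thesis using True by auto
next
  case False
  have "(\<Sum>i\<le>n. kap (absdiff i r) * cv n i) = (\<Sum>i<n+1. kap (absdiff i r) * cv n i)"
    by (simp add: lessThan_Suc_atMost)
  also have "\<dots> = (if r = n+1 then -2*(real n+4) else if r = n+2 then 2*(real n+1) else 0)"
    using Wsum[of n r] False by simp
  finally show ?thesis using False by auto
qed

lemma sum_eqcond: fixes n k c :: nat
  shows "(\<Sum>j\<le>n. if j + k = c then f j else 0) = (if k \<le> c \<and> c - k \<le> n then f (c-k) else (0::real))"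
proof -
  have "(\<Sum>j\<le>n. if j + k = c then f j else 0) = (\<Sum>j\<le>n. if j = c - k then (if k \<le> c then f (c-k) else 0) else 0)"
    by (rule sum.cong[OF refl]) auto
  also have "\<dots> = (if c - k \<le> n then (if k \<le> c then f (c-k) else 0) else 0)"
    by (subst sum.delta) auto
  finally show ?thesis by auto
qed

lemma Sdouble: "(\<Sum>i\<le>n. \<Sum>j\<le>n. cv n i * cv n (n-j) * kap (absdiff i (j+k))) =
   (\<Sum>j\<le>n. cv n (n-j) * (\<Sum>i\<le>n. kap (absdiff i (j+k)) * cv n i))"
proof -
  have "(\<Sum>i\<le>n. \<Sum>j\<le>n. cv n i * cv n (n-j) * kap (absdiff i (j+k))) =
     (\<Sum>j\<le>n. \<Sum>i\<le>n. cv n i * cv n (n-j) * kap (absdiff i (j+k)))"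
    by (rule sum.swap)
  also have "\<dots> = (\<Sum>j\<le>n. cv n (n-j) * (\<Sum>i\<le>n. kap (absdiff i (j+k)) * cv n i))"
    by (rule sum.cong[OF refl]) (simp add: sum_distrib_left mult_ac)
  finally show ?thesis .
qed

lemma Sval: "(\<Sum>i\<le>n. \<Sum>j\<le>n. cv n i * cv n (n-j) * kap (absdiff i (j+k))) =
   (if k = 0 then cv n n * ((real n+3)*(real n+4)) else 0)
   + (if 1 \<le> k \<and> k \<le> n+1 then -2*(real n+4) * cv n (k-1) else 0)
   + (if 2 \<le> k \<and> k \<le> n+2 then 2*(real n+1) * cv n (k-2) else 0)"
proof -
  have "(\<Sum>i\<le>n. \<Sum>j\<le>n. cv n i * cv n (n-j) * kap (absdiff i (j+k))) =
     (\<Sum>j\<le>n. (if j + k = 0 then cv n (n-j) * ((real n+3)*(real n+4)) else 0))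
   + (\<Sum>j\<le>n. (if j + k = n+1 then cv n (n-j) * (-2*(real n+4)) else 0))
   + (\<Sum>j\<le>n. (if j + k = n+2 then cv n (n-j) * (2*(real n+1)) else 0))"
    unfolding Sdouble Wfull sum.distrib[symmetric]
    by (rule sum.cong[OF refl]) (simp add: algebra_simps)
  also have "\<dots> = (if k = 0 then cv n n * ((real n+3)*(real n+4)) else 0)
   + (if 1 \<le> k \<and> k \<le> n+1 then -2*(real n+4) * cv n (k-1) else 0)
   + (if 2 \<le> k \<and> k \<le> n+2 then 2*(real n+1) * cv n (k-2) else 0)"
  proof -
    have a1: "n - (n+1-k) = k-1" if "1 \<le> k" "k \<le> n+1" using that by auto
    have a2: "n - (n+2-k) = k-2" if "2 \<le> k" "k \<le> n+2" using that by auto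
    show ?thesis unfolding sum_eqcond using a1 a2 by (cases "k = n+2") (auto simp: algebra_simps)
  qed
  finally show ?thesis .
qed

lemma inner_val: "h2_inner (mon_mult 0 k (phi n)) (mon_mult k 0 (psi n)) =
   ((if k = 0 then cv n n * ((real n+3)*(real n+4)) else 0)
   + (if 1 \<le> k \<and> k \<le> n+1 then -2*(real n+4) * cv n (k-1) else 0)
   + (if 2 \<le> k \<and> k \<le> n+2 then 2*(real n+1) * cv n (k-2) else 0)) / NN n"
  unfolding inner_eq Sval ..

lemma inner0: "h2_inner (mon_mult 0 0 (phi n)) (mon_mult 0 0 (psi n)) = 2 / (real n + 2)"
proof -
  have "h2_inner (mon_mult 0 0 (phi n)) (mon_mult 0 0 (psi n)) = cv n n * ((real n+3)*(real n+4)) / NN n"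
    using inner_val[of 0 n] by simp
  also have "\<dots> = 2 / (real n + 2)"
  proof -
    have nz: "NN n \<noteq> 0" "real n + 2 \<noteq> 0" using NN_pos[of n] by auto
    show ?thesis unfolding frac_eq_eq[OF nz] by (simp add: NN_def cv_def algebra_simps)
  qed
  finally show ?thesis .
qed

lemma inner1: "h2_inner (mon_mult 0 1 (phi n)) (mon_mult 1 0 (psi n)) = -2 / (real n + 3)"
proof -
  have "h2_inner (mon_mult 0 1 (phi n)) (mon_mult 1 0 (psi n)) = -2*(real n+4) * cv n 0 / NN n"
    using inner_val[of 1 n] by simp
  also have "\<dots> = -2 / (real n + 3)"
  proof -
    have nz: "NN n \<noteq> 0" "real n + 3 \<noteq> 0" using NN_pos[of n] by auto
    show ?thesis unfolding frac_eq_eq[OF nz] by (simp add: NN_def cv_def algebra_simps)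
  qed
  finally show ?thesis .
qed

lemma inner_low: assumes "n + 2 < k"
  shows "h2_inner (mon_mult 0 k (phi n)) (mon_mult k 0 (psi n)) = 0"
  using inner_val[of k n] assms by simp

definition Sr :: "real \<Rightarrow> real \<Rightarrow> real" where
  "Sr y x = 2*(y+x-1)*(y-1)*(x+1)*(x+2) - 2*(y+x+2)*y*x*(x+1)"

definition Nr :: "real \<Rightarrow> real \<Rightarrow> real" where
  "Nr y x = (y+x-1)*(y+x)*(y+x+1)*(y+x+2)"

lemma inner_main: assumes "k \<ge> 2"
  shows "h2_inner (mon_mult 0 k (phi (k-2+m))) (mon_mult k 0 (psi (k-2+m))) = Sr (real k) (real m) / Nr (real k) (real m)"
proof -
  let ?n = "k-2+m"
  have rn: "real ?n = real k - 2 + real m" using assms by simp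
  have c1: "cv ?n (k-1) = real k * real m * (real m + 1)"
    unfolding cv_def using assms by (simp add: rn of_nat_diff algebra_simps)
  have c2: "cv ?n (k-2) = (real k - 1) * (real m + 1) * (real m + 2)"
    unfolding cv_def using assms by (simp add: rn of_nat_diff algebra_simps)
  have g: "(if 1 \<le> k \<and> k \<le> ?n+1 then -2*(real ?n+4) * cv ?n (k-1) else 0) = -2*(real ?n+4) * cv ?n (k-1)"
    using assms c1 by auto
  have "h2_inner (mon_mult 0 k (phi ?n)) (mon_mult k 0 (psi ?n)) =
     (-2*(real ?n+4) * cv ?n (k-1) + 2*(real ?n+1) * cv ?n (k-2)) / NN ?n"
    unfolding inner_val g using assms by simp
  also have "\<dots> = Sr (real k) (real m) / Nr (real k) (real m)"
    unfolding c1 c2 Sr_def Nr_def NN_def rn by (simp add: algebra_simps)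
  finally show ?thesis .
qed


definition Zs :: "real \<Rightarrow> real" where "Zs a = (\<Sum>m. 1 / (a + real m)^2)"
definition A3 :: "real \<Rightarrow> real" where
  "A3 y = 1/y + 1/(2*y^2) + 1/(6*y^3) - 1/(30*y^5) + 1/(42*y^7)"
definition A4 :: "real \<Rightarrow> real" where
  "A4 y = A3 y - 1/(30*y^9)"

lemma A3_form: "y > 0 \<Longrightarrow> A3 y = (210*y^6 + 105*y^5 + 35*y^4 - 7*y^2 + 5)/(210*y^7)"
  unfolding A3_def by (simp add: field_simps) (simp add: algebra_simps power_numeral_reduce)

lemma A4_form: "y > 0 \<Longrightarrow> A4 y = (210*y^8 + 105*y^7 + 35*y^6 - 7*y^4 + 5*y^2 - 7)/(210*y^9)"
  unfolding A4_def A3_form by (simp add: field_simps)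

lemma A3_id: "(y::real) > 0 \<Longrightarrow> (210*y^6 + 105*y^5 + 35*y^4 - 7*y^2 + 5)/(210*y^7) - (210*(y+1)^6 + 105*(y+1)^5 + 35*(y+1)^4 - 7*(y+1)^2 + 5)/(210*(y+1)^7) - 1/y^2
   = (1/42 + y/6 + 7*y^2/15 + 3*y^3/5 + 3*y^4/10) / (y^7 * (y+1)^7)"
  apply (simp add: field_simps)
  apply Groebner_Basis.algebra
  done

lemma A4_id: "(y::real) > 0 \<Longrightarrow> 1/y^2 - ((210*y^8 + 105*y^7 + 35*y^6 - 7*y^4 + 5*y^2 - 7)/(210*y^9) - (210*(y+1)^8 + 105*(y+1)^7 + 35*(y+1)^6 - 7*(y+1)^4 + 5*(y+1)^2 - 7)/(210*(y+1)^9))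
   = (1/30 + 3*y/10 + 247*y^2/210 + 181*y^3/70 + 709*y^4/210 + 5*y^5/2 + 5*y^6/6) / (y^9 * (y+1)^9)"
  apply (simp add: field_simps)
  apply Groebner_Basis.algebra
  done

lemma A3_tel: assumes "y > 0" shows "1/y^2 \<le> A3 y - A3 (y+1)"
proof -
  have p: "y + 1 > 0" using assms by simp
  have "A3 y - A3 (y+1) - 1/y^2 =
     (1/42 + y/6 + 7*y^2/15 + 3*y^3/5 + 3*y^4/10) / (y^7 * (y+1)^7)"
    unfolding A3_form[OF assms] A3_form[OF p] by (rule A3_id[OF assms])
  moreover have "(1/42 + y/6 + 7*y^2/15 + 3*y^3/5 + 3*y^4/10) / (y^7 * (y+1)^7) \<ge> 0"
    using assms by (intro divide_nonneg_pos add_nonneg_nonneg) auto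
  ultimately show ?thesis by linarith
qed

lemma A4_tel: assumes "y > 0" shows "A4 y - A4 (y+1) \<le> 1/y^2"
proof -
  have p: "y + 1 > 0" using assms by simp
  have "1/y^2 - (A4 y - A4 (y+1)) =
     (1/30 + 3*y/10 + 247*y^2/210 + 181*y^3/70 + 709*y^4/210 + 5*y^5/2 + 5*y^6/6) / (y^9 * (y+1)^9)"
    unfolding A4_form[OF assms] A4_form[OF p] by (rule A4_id[OF assms])
  moreover have "(1/30 + 3*y/10 + 247*y^2/210 + 181*y^3/70 + 709*y^4/210 + 5*y^5/2 + 5*y^6/6) / (y^9 * (y+1)^9) \<ge> 0"
    using assms by (intro divide_nonneg_pos add_nonneg_nonneg) auto
  ultimately show ?thesis by linarith
qed

lemma A3_lim: "(\<lambda>m. A3 (a + real m)) \<longlonglongrightarrow> 0"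
  unfolding A3_def by real_asymp

lemma A4_lim: "(\<lambda>m. A4 (a + real m)) \<longlonglongrightarrow> 0"
  unfolding A4_def A3_def by real_asymp

lemma Zs_sums: assumes "a > 0" shows "(\<lambda>m. 1 / (a + real m)^2) sums Zs a"
  and "Zs a \<le> A3 a" and "A4 a \<le> Zs a"
proof -
  have t3: "(\<lambda>m. A3 (a + real m) - A3 (a + real (Suc m))) sums (A3 (a + real 0) - 0)"
    by (rule telescope_sums'[OF A3_lim])
  have t4: "(\<lambda>m. A4 (a + real m) - A4 (a + real (Suc m))) sums (A4 (a + real 0) - 0)"
    by (rule telescope_sums'[OF A4_lim])
  have le3: "1 / (a + real m)^2 \<le> A3 (a + real m) - A3 (a + real (Suc m))" for m
    using A3_tel[of "a + real m"] assms by (simp add: add_ac)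
  have le4: "A4 (a + real m) - A4 (a + real (Suc m)) \<le> 1 / (a + real m)^2" for m
    using A4_tel[of "a + real m"] assms by (simp add: add_ac)
  have sm: "summable (\<lambda>m. 1 / (a + real m)^2)"
    by (rule summable_comparison_test'[OF sums_summable[OF t3], where N=0]) (use le3 in auto)
  then show s: "(\<lambda>m. 1 / (a + real m)^2) sums Zs a" unfolding Zs_def by (rule summable_sums)
  show "Zs a \<le> A3 a" using sums_le[OF le3 s t3] by simp
  show "A4 a \<le> Zs a" using sums_le[OF le4 t4 s] by simp
qed

lemma Zs_step: assumes "a > 0" shows "Zs a = 1/a^2 + Zs (a+1)"
proof -
  have s: "(\<lambda>m. 1 / (a + real m)^2) sums Zs a" using Zs_sums(1)[OF assms] .
  have "(\<lambda>m. 1 / (a + real (Suc m))^2) sums (Zs a - 1/a^2)"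
    using s by (subst sums_Suc_iff) simp
  moreover have "(\<lambda>m. 1 / (a + real (Suc m))^2) = (\<lambda>m. 1 / ((a+1) + real m)^2)"
    by (simp add: algebra_simps)
  ultimately have "(\<lambda>m. 1 / ((a+1) + real m)^2) sums (Zs a - 1/a^2)" by simp
  moreover have "(\<lambda>m. 1 / ((a+1) + real m)^2) sums Zs (a+1)" using Zs_sums(1)[of "a+1"] assms by simp
  ultimately show ?thesis using sums_unique2 by fastforce
qed

lemma tel_d: assumes "a > 0" shows "(\<lambda>m. 1/(a + real m) - 1/(a + real d + real m)) sums (\<Sum>l<d. 1/(a + real l))"
proof (induction d)
  case 0
  then show ?case by simp
next
  case (Suc d)
  have lim: "(\<lambda>m. 1/(a + real d + real m)) \<longlonglongrightarrow> 0" by real_asymp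
  have "(\<lambda>m. 1/(a + real d + real m) - 1/(a + real d + real (Suc m))) sums (1/(a + real d + real 0) - 0)"
    by (rule telescope_sums'[OF lim])
  then have t: "(\<lambda>m. 1/(a + real d + real m) - 1/(a + real (Suc d) + real m)) sums (1/(a + real d))"
    by (simp add: algebra_simps)
  have "(\<lambda>m. (1/(a + real m) - 1/(a + real d + real m)) + (1/(a + real d + real m) - 1/(a + real (Suc d) + real m)))
     sums ((\<Sum>l<d. 1/(a + real l)) + 1/(a + real d))"
    by (rule sums_add[OF Suc.IH t])
  then show ?case by simp
qed


definition r1 :: "real \<Rightarrow> real" where "r1 y = -y*(y-1)*(y-2)"
definition r2 :: "real \<Rightarrow> real" where "r2 y = 3*y^3 - 6*y^2 + 5*y - 2"
definition r3 :: "real \<Rightarrow> real" where "r3 y = -3*y^3 + 3*y^2 - 2*y"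
definition r4 :: "real \<Rightarrow> real" where "r4 y = y*(y-1)*(y+1)"

lemma pf_gen: fixes w z v u y :: real
  assumes nz: "w \<noteq> 0" "z \<noteq> 0" "v \<noteq> 0" "u \<noteq> 0" and eq: "w = z - 1" "v = z + 1" "u = z + 2"
  shows "(2*(z-1)*(y-1)*(z-y+1)*(z-y+2) - 2*(z+2)*y*(z-y)*(z-y+1)) / (w*z*v*u) =
     r1 y/w + r2 y/z + r3 y/v + r4 y/u"
proof -
  have e1: "2*(z-1)*(y-1)*(z-y+1)*(z-y+2) - 2*(z+2)*y*(z-y)*(z-y+1) =
     r1 y * (z*v*u) + r2 y * (w*v*u) + r3 y * (w*z*u) + r4 y * (w*z*v)"
    unfolding r1_def r2_def r3_def r4_def using eq by Groebner_Basis.algebra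
  have e2: "r1 y/w + r2 y/z + r3 y/v + r4 y/u = (r1 y * (z*v*u) + r2 y * (w*v*u) + r3 y * (w*z*u) + r4 y * (w*z*v)) / (w*z*v*u)"
    using nz by (simp add: field_simps)
  show ?thesis unfolding e1 e2 ..
qed

lemma pf_z: assumes "z > 1"
  shows "(2*(z-1)*(y-1)*(z-y+1)*(z-y+2) - 2*(z+2)*y*(z-y)*(z-y+1)) / ((z-1)*z*(z+1)*(z+2)) =
     r1 y/(z-1) + r2 y/z + r3 y/(z+1) + r4 y/(z+2)"
  by (rule pf_gen) (use assms in auto)

lemma Srn: "Sr y x / Nr y x = (2*((y+x)-1)*(y-1)*((y+x)-y+1)*((y+x)-y+2) - 2*((y+x)+2)*y*((y+x)-y)*((y+x)-y+1)) /
   (((y+x)-1)*(y+x)*((y+x)+1)*((y+x)+2))"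
  unfolding Sr_def Nr_def by (simp add: algebra_simps)

lemma pprod: fixes x t e :: real
  assumes "x \<noteq> 0" "t \<noteq> 0" "e \<noteq> 0" "t - x = e"
  shows "(1/x)*(1/t) = (1/x - 1/t)/e"
proof -
  have "1/x - 1/t = (t - x)/(x*t)" using assms(1,2) by (simp add: field_simps)
  then have "(1/x - 1/t)/e = e/(x*t)/e" using assms(4) by simp
  also have "\<dots> = 1/(x*t)" using assms(3) by simp
  finally show ?thesis by simp
qed

lemma sq_dec: fixes a b c d p q r s :: real assumes "a \<noteq> 0" "b \<noteq> 0" "c \<noteq> 0" "d \<noteq> 0"
   "b = a + 1" "c = a + 2" "d = a + 3"
  shows "(p/a + q/b + r/c + s/d)^2 = p^2 * (1/a^2) + q^2 * (1/b^2) + r^2 * (1/c^2) + s^2 * (1/d^2)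
    + 2*p*q*(1/a - 1/b) + p*r*(1/a - 1/c) + 2/3*p*s*(1/a - 1/d) + 2*q*r*(1/b - 1/c)
    + q*s*(1/b - 1/d) + 2*r*s*(1/c - 1/d)"
proof -
  have e1: "(1/a)*(1/b) = 1/a - 1/b" "(1/a)*(1/c) = (1/a - 1/c)/2" "(1/a)*(1/d) = (1/a - 1/d)/3"
    "(1/b)*(1/c) = 1/b - 1/c" "(1/b)*(1/d) = (1/b - 1/d)/2" "(1/c)*(1/d) = 1/c - 1/d"
    using pprod[of a b 1] pprod[of a c 2] pprod[of a d 3] pprod[of b c 1] pprod[of b d 2] pprod[of c d 1] assms
    by simp_all
  have "(p/a + q/b + r/c + s/d)^2 = (p*(1/a) + q*(1/b) + r*(1/c) + s*(1/d))^2" by simp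
  also have "\<dots> = p^2 * (1/a)^2 + q^2 * (1/b)^2 + r^2 * (1/c)^2 + s^2 * (1/d)^2
    + 2*p*q*((1/a)*(1/b)) + 2*p*r*((1/a)*(1/c)) + 2*p*s*((1/a)*(1/d)) + 2*q*r*((1/b)*(1/c))
    + 2*q*s*((1/b)*(1/d)) + 2*r*s*((1/c)*(1/d))"
    by (simp add: power2_eq_square algebra_simps)
  also have "\<dots> = p^2 * (1/a^2) + q^2 * (1/b^2) + r^2 * (1/c^2) + s^2 * (1/d^2)
    + 2*p*q*(1/a - 1/b) + p*r*(1/a - 1/c) + 2/3*p*s*(1/a - 1/d) + 2*q*r*(1/b - 1/c)
    + q*s*(1/b - 1/d) + 2*r*s*(1/c - 1/d)"
    unfolding e1 by (simp add: power_one_over)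
  finally show ?thesis .
qed

lemma T_dec: assumes "y \<ge> 2" "x \<ge> 0"
  shows "(Sr y x / Nr y x)^2 = r1 y^2 * (1/(y-1+x)^2) + r2 y^2 * (1/(y+x)^2) + r3 y^2 * (1/(y+1+x)^2) + r4 y^2 * (1/(y+2+x)^2)
    + 2*r1 y*r2 y*(1/(y-1+x) - 1/(y+x)) + r1 y*r3 y*(1/(y-1+x) - 1/(y+1+x)) + 2/3*r1 y*r4 y*(1/(y-1+x) - 1/(y+2+x))
    + 2*r2 y*r3 y*(1/(y+x) - 1/(y+1+x)) + r2 y*r4 y*(1/(y+x) - 1/(y+2+x)) + 2*r3 y*r4 y*(1/(y+1+x) - 1/(y+2+x))"
proof -
  have z: "y + x > 1" using assms by simp
  have "Sr y x / Nr y x = r1 y/(y+x-1) + r2 y/(y+x) + r3 y/(y+x+1) + r4 y/(y+x+2)"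
    unfolding Srn using pf_z[OF z] .
  also have "\<dots> = r1 y/(y-1+x) + r2 y/(y+x) + r3 y/(y+1+x) + r4 y/(y+2+x)"
    by (simp add: algebra_simps)
  finally have e: "Sr y x / Nr y x = r1 y/(y-1+x) + r2 y/(y+x) + r3 y/(y+1+x) + r4 y/(y+2+x)" .
  show ?thesis unfolding e
    by (rule sq_dec) (use assms in auto)
qed


definition VV :: "real \<Rightarrow> real" where
  "VV y = r1 y^2 * Zs (y-1) + r2 y^2 * Zs y + r3 y^2 * Zs (y+1) + r4 y^2 * Zs (y+2)
    + 2*r1 y*r2 y*(1/(y-1)) + r1 y*r3 y*(1/(y-1) + 1/y) + 2/3*r1 y*r4 y*(1/(y-1) + 1/y + 1/(y+1))
    + 2*r2 y*r3 y*(1/y) + r2 y*r4 y*(1/y + 1/(y+1)) + 2*r3 y*r4 y*(1/(y+1))"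

lemma T_sums: assumes "y \<ge> 2"
  shows "(\<lambda>m. (Sr y (real m) / Nr y (real m))^2) sums VV y"
proof -
  have p: "y - 1 > 0" "y > 0" "y + 1 > 0" "y + 2 > 0" using assms by auto
  have d1a: "(\<lambda>m. 1/(y-1+real m) - 1/(y+real m)) sums (1/(y-1))"
    using tel_d[OF p(1), of 1] by simp
  have d2a: "(\<lambda>m. 1/(y-1+real m) - 1/(y+1+real m)) sums (1/(y-1) + 1/y)"
    using tel_d[OF p(1), of 2] by (simp add: numeral_2_eq_2 algebra_simps)
  have d3a: "(\<lambda>m. 1/(y-1+real m) - 1/(y+2+real m)) sums (1/(y-1) + 1/y + 1/(y+1))"
    using tel_d[OF p(1), of 3] by (simp add: numeral_3_eq_3 algebra_simps)
  have d1b: "(\<lambda>m. 1/(y+real m) - 1/(y+1+real m)) sums (1/y)"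
    using tel_d[OF p(2), of 1] by (simp add: algebra_simps)
  have d2b: "(\<lambda>m. 1/(y+real m) - 1/(y+2+real m)) sums (1/y + 1/(y+1))"
    using tel_d[OF p(2), of 2] by (simp add: numeral_2_eq_2 algebra_simps)
  have d1c: "(\<lambda>m. 1/(y+1+real m) - 1/(y+2+real m)) sums (1/(y+1))"
    using tel_d[OF p(3), of 1] by (simp add: algebra_simps)
  have s1: "(\<lambda>m. 1/(y-1+real m)^2) sums Zs (y-1)" by (rule Zs_sums(1)[OF p(1)])
  have s2: "(\<lambda>m. 1/(y+real m)^2) sums Zs y" by (rule Zs_sums(1)[OF p(2)])
  have s3: "(\<lambda>m. 1/(y+1+real m)^2) sums Zs (y+1)" by (rule Zs_sums(1)[OF p(3)])
  have s4: "(\<lambda>m. 1/(y+2+real m)^2) sums Zs (y+2)" by (rule Zs_sums(1)[OF p(4)])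
  have "(\<lambda>m. r1 y^2 * (1/(y-1+real m)^2) + r2 y^2 * (1/(y+real m)^2) + r3 y^2 * (1/(y+1+real m)^2) + r4 y^2 * (1/(y+2+real m)^2)
    + 2*r1 y*r2 y*(1/(y-1+real m) - 1/(y+real m)) + r1 y*r3 y*(1/(y-1+real m) - 1/(y+1+real m)) + 2/3*r1 y*r4 y*(1/(y-1+real m) - 1/(y+2+real m))
    + 2*r2 y*r3 y*(1/(y+real m) - 1/(y+1+real m)) + r2 y*r4 y*(1/(y+real m) - 1/(y+2+real m)) + 2*r3 y*r4 y*(1/(y+1+real m) - 1/(y+2+real m)))
    sums VV y"
    unfolding VV_def
    by (intro sums_add sums_mult s1 s2 s3 s4 d1a d2a d3a d1b d2b d1c)
  moreover have "(Sr y (real m) / Nr y (real m))^2 = r1 y^2 * (1/(y-1+real m)^2) + r2 y^2 * (1/(y+real m)^2) + r3 y^2 * (1/(y+1+real m)^2) + r4 y^2 * (1/(y+2+real m)^2)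
    + 2*r1 y*r2 y*(1/(y-1+real m) - 1/(y+real m)) + r1 y*r3 y*(1/(y-1+real m) - 1/(y+1+real m)) + 2/3*r1 y*r4 y*(1/(y-1+real m) - 1/(y+2+real m))
    + 2*r2 y*r3 y*(1/(y+real m) - 1/(y+1+real m)) + r2 y*r4 y*(1/(y+real m) - 1/(y+2+real m)) + 2*r3 y*r4 y*(1/(y+1+real m) - 1/(y+2+real m))" for m
    by (rule T_dec) (use assms in auto)
  ultimately show ?thesis by simp
qed

lemma Sigma_VV: assumes "k \<ge> 2" shows "Sigma k = VV (real k)"
proof -
  let ?f = "\<lambda>n. \<bar>h2_inner (mon_mult 0 k (phi n)) (mon_mult k 0 (psi n))\<bar>^2"
  have z: "?f i = 0" if "i < k - 2" for i
    using inner_low[of i k] that by simp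
  have sh: "?f (m + (k-2)) = (Sr (real k) (real m) / Nr (real k) (real m))^2" for m
    using inner_main[OF assms, of m] by (simp only: add.commute power2_abs)
  have "(\<lambda>m. ?f (m + (k-2))) sums VV (real k)"
    unfolding sh by (rule T_sums) (use assms in simp)
  then have "?f sums VV (real k)" using sums_zero_iff_shift[of "k-2" ?f] z by blast
  then show ?thesis unfolding Sigma_def by (rule sums_unique[symmetric])
qed


definition Cp :: "real \<Rightarrow> real" where
  "Cp y = 20*y^6 - 60*y^5 + 98*y^4 - 96*y^3 + 58*y^2 - 20*y + 4"
definition Hn :: "real \<Rightarrow> real" where
  "Hn y = 12 - 36*y + 93*y^2 - 107*y^3 + 98*y^4 - 117*y^5 + 181*y^6 - 214*y^7 + 150*y^8 - 60*y^9"
definition Hp :: "real \<Rightarrow> real" where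
  "Hp y = Hn y / (3*y^2*(y+1)^2)"

lemma Cp_eq: "r1 y^2 + r2 y^2 + r3 y^2 + r4 y^2 = Cp y"
  unfolding r1_def r2_def r3_def r4_def Cp_def by Groebner_Basis.algebra

lemma rest_gen: fixes y w v :: real
  assumes nz: "w \<noteq> 0" "y \<noteq> 0" "v \<noteq> 0" and eq: "w = y - 1" "v = y + 1"
  shows "r1 y^2 * (1/w^2 + 1/y^2 + 1/v^2) + r2 y^2 * (1/y^2 + 1/v^2) + r3 y^2 * (1/v^2)
    + 2*r1 y*r2 y*(1/w) + r1 y*r3 y*(1/w + 1/y) + 2/3*r1 y*r4 y*(1/w + 1/y + 1/v)
    + 2*r2 y*r3 y*(1/y) + r2 y*r4 y*(1/y + 1/v) + 2*r3 y*r4 y*(1/v) = Hn y / (3*y^2*v^2)"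
  unfolding r1_def r2_def r3_def r4_def Hn_def
  using nz apply (simp add: field_simps)
  using eq apply Groebner_Basis.algebra
  done

lemma lin_id: fixes Z1 Z2 Z3 Z4 :: real
  shows "Z1 = a2 + Z2 \<Longrightarrow> Z2 = b2 + Z3 \<Longrightarrow> Z3 = c2 + Z4 \<Longrightarrow>
   R1*Z1 + R2*Z2 + R3*Z3 + R4*Z4 + X = (R1+R2+R3+R4)*Z4 + (R1*(a2+b2+c2) + R2*(b2+c2) + R3*c2 + X)"
  by (simp add: algebra_simps)

lemma VV_eq: assumes "y \<ge> 2" shows "VV y = Cp y * Zs (y+2) + Hp y"
proof -
  have z1: "Zs (y-1) = 1/(y-1)^2 + Zs y" using Zs_step[of "y-1"] assms by simp
  have z2: "Zs y = 1/y^2 + Zs (y+1)" using Zs_step[of y] assms by simp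
  have z3: "Zs (y+1) = 1/(y+1)^2 + Zs (y+2)" using Zs_step[of "y+1"] assms by (simp add: add.assoc)
  have "VV y = (r1 y^2 + r2 y^2 + r3 y^2 + r4 y^2) * Zs (y+2) +
    (r1 y^2 * (1/(y-1)^2 + 1/y^2 + 1/(y+1)^2) + r2 y^2 * (1/y^2 + 1/(y+1)^2) + r3 y^2 * (1/(y+1)^2)
    + (2*r1 y*r2 y*(1/(y-1)) + r1 y*r3 y*(1/(y-1) + 1/y) + 2/3*r1 y*r4 y*(1/(y-1) + 1/y + 1/(y+1))
    + 2*r2 y*r3 y*(1/y) + r2 y*r4 y*(1/y + 1/(y+1)) + 2*r3 y*r4 y*(1/(y+1))))"
    unfolding VV_def using lin_id[OF z1 z2 z3] by (simp add: add.assoc)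
  also have "\<dots> = Cp y * Zs (y+2) + Hp y"
    unfolding Cp_eq Hp_def using rest_gen[of "y-1" y "y+1"] assms by (simp add: add.assoc)
  finally show ?thesis .
qed


definition numP :: "real \<Rightarrow> real" where
  "numP y = 512 + 256*y + 1408*y^2 + (18548/7)*y^3 + (14808/7)*y^4 + (117608/105)*y^5 + (44624/105)*y^6 + (3352/35)*y^7 + (1472/105)*y^8 + (92/105)*y^9"

lemma dec_gen: fixes y v u :: real
  assumes nz: "y \<noteq> 0" "v \<noteq> 0" "u \<noteq> 0" and eq: "v = y + 1" "u = y + 2"
  shows "Hn y/(3*y^2*v^2) - Hn v/(3*v^2*u^2) + Cp v/u^2 - (Cp v - Cp y) * ((210*u^6 + 105*u^5 + 35*u^4 - 7*u^2 + 5)/(210*u^7))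
     = numP y / (y^2*v^2*u^7)"
  unfolding Hn_def Cp_def numP_def
  using nz apply (simp add: field_simps)
  using eq apply Groebner_Basis.algebra
  done

lemma Sigma_k: "k \<ge> 2 \<Longrightarrow> Sigma k = Cp (real k) * Zs (real k + 2) + Hp (real k)"
  using Sigma_VV VV_eq by simp

lemma EE_nonneg: "y \<ge> 0 \<Longrightarrow> Cp (y+1) - Cp y \<ge> 0"
proof -
  assume y: "y \<ge> 0"
  have "Cp (y+1) - Cp y = 40*y + 192*y^3 + 120*y^5"
    unfolding Cp_def by Groebner_Basis.algebra
  then show ?thesis using y by simp
qed

lemma dec_big: assumes "k \<ge> 2" shows "Sigma (Suc k) < Sigma k"
proof -
  define y where "y = real k"
  have y2: "y \<ge> 2" using assms y_def by simp
  define Z where "Z = Zs (y+2)"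
  have S1: "Sigma k = Cp y * Z + Hp y" using Sigma_k[OF assms] y_def Z_def by simp
  have S2: "Sigma (Suc k) = Cp (y+1) * Zs (y+3) + Hp (y+1)"
    using Sigma_k[of "Suc k"] assms y_def by (simp add: add_ac)
  have Zst: "Zs (y+3) = Z - 1/(y+2)^2" using Zs_step[of "y+2"] y2 Z_def by (simp add: add.assoc)
  have key: "Sigma k - Sigma (Suc k) = Hp y - Hp (y+1) + Cp (y+1)/(y+2)^2 - (Cp (y+1) - Cp y) * Z"
    unfolding S1 S2 Zst by (simp add: algebra_simps)
  have ZA: "Z \<le> A3 (y+2)" using Zs_sums(2)[of "y+2"] y2 Z_def by simp
  have pr: "(Cp (y+1) - Cp y) * Z \<le> (Cp (y+1) - Cp y) * A3 (y+2)"
    by (rule mult_left_mono[OF ZA EE_nonneg]) (use y2 in simp)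
  have hp1: "Hp (y+1) = Hn (y+1) / (3*(y+1)^2*(y+2)^2)"
    unfolding Hp_def by (simp add: add.assoc)
  have a3: "A3 (y+2) = (210*(y+2)^6 + 105*(y+2)^5 + 35*(y+2)^4 - 7*(y+2)^2 + 5)/(210*(y+2)^7)"
    by (rule A3_form) (use y2 in simp)
  have idt: "Hp y - Hp (y+1) + Cp (y+1)/(y+2)^2 - (Cp (y+1) - Cp y) * A3 (y+2) = numP y / (y^2*(y+1)^2*(y+2)^7)"
    unfolding hp1 a3 Hp_def[of y] by (rule dec_gen) (use y2 in auto)
  have pos: "numP y / (y^2*(y+1)^2*(y+2)^7) > 0"
    unfolding numP_def using y2 by (intro divide_pos_pos add_pos_nonneg) auto
  show ?thesis using key pr idt pos by linarith
qed

lemma Sigma0: "Sigma 0 = 4 * Zs 2"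
proof -
  have "(\<lambda>n. 4 * (1 / (2 + real n)^2)) sums (4 * Zs 2)"
    by (rule sums_mult) (rule Zs_sums(1), simp)
  moreover have "\<bar>h2_inner (mon_mult 0 0 (phi n)) (mon_mult 0 0 (psi n))\<bar>^2 = 4 * (1 / (2 + real n)^2)" for n
    unfolding inner0 by (simp add: power2_eq_square field_simps)
  ultimately show ?thesis unfolding Sigma_def by (simp add: sums_unique[symmetric])
qed

lemma Sigma1: "Sigma 1 = 4 * Zs 3"
proof -
  have "(\<lambda>n. 4 * (1 / (3 + real n)^2)) sums (4 * Zs 3)"
    by (rule sums_mult) (rule Zs_sums(1), simp)
  moreover have "\<bar>h2_inner (mon_mult 0 1 (phi n)) (mon_mult 1 0 (psi n))\<bar>^2 = 4 * (1 / (3 + real n)^2)" for n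
    unfolding inner1 by (simp add: power2_eq_square field_simps)
  ultimately show ?thesis unfolding Sigma_def by (simp add: sums_unique[symmetric])
qed

lemma dec_all: "Sigma (Suc k) < Sigma k"
proof (cases "k \<ge> 2")
  case True then show ?thesis by (rule dec_big)
next
  case False
  then have "k = 0 \<or> k = 1" by auto
  then show ?thesis
  proof
    assume k: "k = 0"
    have "Zs 2 = 1/4 + Zs 3" using Zs_step[of 2] by simp
    then show ?thesis using k Sigma0 Sigma1 by simp
  next
    assume k: "k = 1"
    have z3: "Zs 3 = 1/9 + Zs 4" using Zs_step[of 3] by simp
    have s2: "Sigma 2 = Cp 2 * Zs 4 + Hp 2" using Sigma_k[of 2] by simp
    have c2: "Cp 2 = 356" by (simp add: Cp_def)
    have h2: "Hp 2 = -904/9" by (simp add: Hp_def Hn_def)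
    have a4: "Zs 4 \<le> A3 4" using Zs_sums(2)[of 4] by simp
    have a34: "A3 4 = 1/4 + 1/32 + 1/384 - 1/30720 + 1/688128" by (simp add: A3_def)
    show ?thesis using k Sigma1 z3 s2 c2 h2 a4 a34 by (simp add: numeral_2_eq_2)
  qed
qed


lemma Cp_nonneg: "Cp y \<ge> 0"
  using Cp_eq[of y, symmetric] by simp

lemma Sigma_bounds: assumes "k \<ge> 2"
  shows "Cp (real k) * A4 (real k + 2) + Hp (real k) \<le> Sigma k"
    "Sigma k \<le> Cp (real k) * A3 (real k + 2) + Hp (real k)"
proof -
  have p: "real k + 2 > 0" by simp
  show "Cp (real k) * A4 (real k + 2) + Hp (real k) \<le> Sigma k"
    unfolding Sigma_k[OF assms] using mult_left_mono[OF Zs_sums(3)[OF p] Cp_nonneg] by simp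
  show "Sigma k \<le> Cp (real k) * A3 (real k + 2) + Hp (real k)"
    unfolding Sigma_k[OF assms] using mult_left_mono[OF Zs_sums(2)[OF p] Cp_nonneg] by simp
qed

lemma hi_O: "(\<lambda>k::nat. Cp (real k) * A3 (real k + 2) + Hp (real k) - (92 / (105 * real k) + 46 / (105 * (real k)^2)))
   \<in> O(\<lambda>k. 1 / (real k)^3)"
  unfolding Cp_def A3_def Hp_def Hn_def by real_asymp

lemma lo_O: "(\<lambda>k::nat. Cp (real k) * A4 (real k + 2) + Hp (real k) - (92 / (105 * real k) + 46 / (105 * (real k)^2)))
   \<in> O(\<lambda>k. 1 / (real k)^3)"
  unfolding Cp_def A4_def A3_def Hp_def Hn_def by real_asymp

theorem theorem3p5:
  shows "(\<forall>k. Sigma (Suc k) < Sigma k) \<and>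
         (\<lambda>k::nat. Sigma k - (92 / (105 * real k) + 46 / (105 * (real k)^2)))
            \<in> O(\<lambda>k. 1 / (real k)^3)"
proof
  show "\<forall>k. Sigma (Suc k) < Sigma k" using dec_all by blast
next
  define mn where "mn k = 92 / (105 * real k) + 46 / (105 * (real k)^2)" for k :: nat
  define gh where "gh k = Cp (real k) * A3 (real k + 2) + Hp (real k) - mn k" for k :: nat
  define gl where "gl k = Cp (real k) * A4 (real k + 2) + Hp (real k) - mn k" for k :: nat
  have h: "gh \<in> O(\<lambda>k. 1 / (real k)^3)" unfolding gh_def mn_def by (rule hi_O)
  have l: "gl \<in> O(\<lambda>k. 1 / (real k)^3)" unfolding gl_def mn_def by (rule lo_O)
  have s: "(\<lambda>k. \<bar>gl k\<bar> + \<bar>gh k\<bar>) \<in> O(\<lambda>k. 1 / (real k)^3)"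
    by (rule sum_in_bigo(1)) (use h l in simp_all)
  have ev: "eventually (\<lambda>k. norm (Sigma k - mn k) \<le> norm (\<bar>gl k\<bar> + \<bar>gh k\<bar>)) at_top"
    unfolding eventually_at_top_linorder
  proof (intro exI allI impI)
    fix k :: nat assume "k \<ge> 2"
    then have "gl k \<le> Sigma k - mn k" "Sigma k - mn k \<le> gh k"
      using Sigma_bounds[of k] unfolding gl_def gh_def by auto
    then show "norm (Sigma k - mn k) \<le> norm (\<bar>gl k\<bar> + \<bar>gh k\<bar>)" by auto
  qed
  have "(\<lambda>k. Sigma k - mn k) \<in> O(\<lambda>k. \<bar>gl k\<bar> + \<bar>gh k\<bar>)"
    by (rule landau_o.big_mono[OF ev])
  then have "(\<lambda>k. Sigma k - mn k) \<in> O(\<lambda>k. 1 / (real k)^3)"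
    using s by (rule landau_o.big_trans)
  then show "(\<lambda>k::nat. Sigma k - (92 / (105 * real k) + 46 / (105 * (real k)^2))) \<in> O(\<lambda>k. 1 / (real k)^3)"
    unfolding mn_def .
qed


end
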